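(* On $\mathcal M_{\mathcal G,\Gamma}$ the metric $$\mathrm w_{\mathcal G,\Gamma}(T,S)=\mathrm a_{\mathcal G}(T,S)+\sup_{g\in\Gamma}\mathrm a(T^g,S^g)$$ induces the same topology as the metric $\mathrm m_{\mathcal G,\Gamma}$ (the leash topology).
   Context: $(X,\Sigma,\mu)$ is a separable Lebesgue space with a non-atomic probability measure $\mu$. $\mathcal A$ is the group of invertible measure-preserving transformations of $X$, two transformations being identified if they agree outside a null set. Fix a countable family $\{A_i\}_{i\in\mathbb N}\subset\Sigma$ that generates $\Sigma$ and is dense in $\Sigma$ (for every $A\in\Sigma$ and $\varepsilon>0$ there is $i$ with $\mu(A_i\triangle A)<\varepsilon$). For $T,S\in\mathcal A$ put $\mathrm d(T,S)=\sum_{i}2^{-i}\big(\mu(TA_i\triangle SA_i)+\mu(T^{-1}A_i\triangle S^{-1}A_i)\big)$ and $\mathrm a(T,S)=\sum_{i,j}2^{-(i+j)}|\mu(TA_i\cap A_j)-\mu(SA_i\cap A_j)|$. $\mathcal G$ is a Hausdorff locally compact group with a countable neighborhood base. Fix an at most countable family $\{K_i\}$ of compact subsets of $\mathcal G$ with nonempty interiors whose union contains a set generating $\mathcal G$. An action of $\mathcal G$ is a family $T=\{T^g\}_{g\in\mathcal G}\subset\mathcal A$ with $T^gT^h=T^{gh}$ for all $g,h$ and such that $g\mapsto\mu(T^gA\cap B)$ is continuous for all $A,B\in\Sigma$. For actions $T,S$: $\mathrm d_{\mathcal G}(T,S)=\sum_i 2^{-i}\sup_{g\in K_i}\mathrm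 d(T^g,S^g)$ and $\mathrm a_{\mathcal G}(T,S)=\sum_i 2^{-i}\sup_{g\in K_i}\mathrm a(T^g,S^g)$. Let $\Gamma\subset\mathcal G$ be an unbounded subset (not contained in any compact set). An action $T$ is $\Gamma$-mixing if for all $A,B\in\Sigma$ and $\varepsilon>0$ there is a compact $C\subset\mathcal G$ with $|\mu(T^gA\cap B)-\mu(A)\mu(B)|<\varepsilon$ for all $g\in\Gamma\setminus C$. $\mathcal M_{\mathcal G,\Gamma}$ is the set of all $\Gamma$-mixing actions with the leash metric $\mathrm m_{\mathcal G,\Gamma}(T,S)=\mathrm d_{\mathcal G}(T,S)+\sup_{g\in\Gamma}\mathrm a(T^g,S^g)$. *)

theory Defs
  imports "HOL-Probability.Probability"
begin

definition meas_pres :: "'a measure \<Rightarrow> 'b measure \<Rightarrow> ('a \<Rightarrow> 'b) set" where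
  "meas_pres M N = {f. f \<in> measurable M N \<and> distr M N f = N}"

definition lebesgue_space :: "'a measure \<Rightarrow> bool" where
  "lebesgue_space M \<longleftrightarrow>
     (\<exists>f g. f \<in> meas_pres M (lebesgue_on {0..1::real}) \<and>
            g \<in> meas_pres (lebesgue_on {0..1::real}) M \<and>
            (AE x in M. g (f x) = x) \<and> (AE y in lebesgue_on {0..1::real}. f (g y) = y))"

definition non_atomic :: "'a measure \<Rightarrow> bool" where
  "non_atomic M \<longleftrightarrow> (\<forall>A\<in>sets M. measure M A > 0 \<longrightarrow>
      (\<exists>B\<in>sets M. B \<subseteq> A \<and> 0 < measure M B \<and> measure M B < measure M A))"

definition symdiff :: "'a set \<Rightarrow> 'a set \<Rightarrow> 'a set" where
  "symdiff X Y = (X - Y) \<union> (Y - X)"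

definition generates_mod0 :: "'a measure \<Rightarrow> (nat \<Rightarrow> 'a set) \<Rightarrow> bool" where
  "generates_mod0 M A \<longleftrightarrow> (\<forall>B\<in>sets M. \<exists>C\<in>sigma_sets (space M) (range A).
       symdiff B C \<in> null_sets M)"

definition dense_family :: "'a measure \<Rightarrow> (nat \<Rightarrow> 'a set) \<Rightarrow> bool" where
  "dense_family M A \<longleftrightarrow> (\<forall>B\<in>sets M. \<forall>e>0. \<exists>i. measure M (symdiff (A i) B) < e)"

definition mp_aut :: "'a measure \<Rightarrow> ('a \<Rightarrow> 'a) \<Rightarrow> bool" where
  "mp_aut M T \<longleftrightarrow> T \<in> meas_pres M M \<and>
     (\<exists>S\<in>meas_pres M M. (AE x in M. S (T x) = x) \<and> (AE x in M. T (S x) = x))"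

text \<open>The inverse (unique mod 0).\<close>
definition aut_inv :: "'a measure \<Rightarrow> ('a \<Rightarrow> 'a) \<Rightarrow> ('a \<Rightarrow> 'a)" where
  "aut_inv M T = (SOME S. S \<in> meas_pres M M \<and>
       (AE x in M. S (T x) = x) \<and> (AE x in M. T (S x) = x))"

definition aut_img :: "'a measure \<Rightarrow> ('a \<Rightarrow> 'a) \<Rightarrow> 'a set \<Rightarrow> 'a set" where
  "aut_img M T X = aut_inv M T -` X \<inter> space M"

definition aut_pre :: "'a measure \<Rightarrow> ('a \<Rightarrow> 'a) \<Rightarrow> 'a set \<Rightarrow> 'a set" where
  "aut_pre M T X = T -` X \<inter> space M"

definition dist_d :: "'a measure \<Rightarrow> (nat \<Rightarrow> 'a set) \<Rightarrow> ('a \<Rightarrow> 'a) \<Rightarrow> ('a \<Rightarrow> 'a) \<Rightarrow> real" where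
  "dist_d M A T S = (\<Sum>i. (1/2::real)^i *
      (measure M (symdiff (aut_img M T (A i)) (aut_img M S (A i))) +
       measure M (symdiff (aut_pre M T (A i)) (aut_pre M S (A i)))))"

definition dist_a :: "'a measure \<Rightarrow> (nat \<Rightarrow> 'a set) \<Rightarrow> ('a \<Rightarrow> 'a) \<Rightarrow> ('a \<Rightarrow> 'a) \<Rightarrow> real" where
  "dist_a M A T S = (\<Sum>i. \<Sum>j. (1/2::real)^(i+j) *
      \<bar>measure M (aut_img M T (A i) \<inter> A j) - measure M (aut_img M S (A i) \<inter> A j)\<bar>)"

definition generated_subgroup :: "'g::group_add set \<Rightarrow> 'g set" where
  "generated_subgroup X = \<Inter>{H. X \<subseteq> H \<and> 0 \<in> H \<and> (\<forall>x\<in>H. \<forall>y\<in>H. x + y \<in> H) \<and> (\<forall>x\<in>H. - x \<in> H)}"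

text \<open>Actions: the group is written additively (not necessarily commutative).\<close>
definition is_action :: "'a measure \<Rightarrow> ('g::topological_group_add \<Rightarrow> 'a \<Rightarrow> 'a) \<Rightarrow> bool" where
  "is_action M T \<longleftrightarrow> (\<forall>g. mp_aut M (T g)) \<and>
     (\<forall>g h. AE x in M. T (g + h) x = T g (T h x)) \<and>
     (\<forall>X\<in>sets M. \<forall>Y\<in>sets M. continuous_on UNIV (\<lambda>g. measure M (aut_img M (T g) X \<inter> Y)))"

definition dist_dG :: "'a measure \<Rightarrow> (nat \<Rightarrow> 'a set) \<Rightarrow> nat set \<Rightarrow> (nat \<Rightarrow> 'g set)
    \<Rightarrow> ('g \<Rightarrow> 'a \<Rightarrow> 'a) \<Rightarrow> ('g \<Rightarrow> 'a \<Rightarrow> 'a) \<Rightarrow> real" where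
  "dist_dG M A I K T S = (\<Sum>\<^sub>\<infinity>i\<in>I. (1/2::real)^i * (SUP g\<in>K i. dist_d M A (T g) (S g)))"

definition dist_aG :: "'a measure \<Rightarrow> (nat \<Rightarrow> 'a set) \<Rightarrow> nat set \<Rightarrow> (nat \<Rightarrow> 'g set)
    \<Rightarrow> ('g \<Rightarrow> 'a \<Rightarrow> 'a) \<Rightarrow> ('g \<Rightarrow> 'a \<Rightarrow> 'a) \<Rightarrow> real" where
  "dist_aG M A I K T S = (\<Sum>\<^sub>\<infinity>i\<in>I. (1/2::real)^i * (SUP g\<in>K i. dist_a M A (T g) (S g)))"

definition gamma_mixing :: "'a measure \<Rightarrow> 'g::topological_group_add set \<Rightarrow> ('g \<Rightarrow> 'a \<Rightarrow> 'a) \<Rightarrow> bool" where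
  "gamma_mixing M \<Gamma> T \<longleftrightarrow> (\<forall>X\<in>sets M. \<forall>Y\<in>sets M. \<forall>e>0. \<exists>C. compact C \<and>
      (\<forall>g\<in>\<Gamma> - C. \<bar>measure M (aut_img M (T g) X \<inter> Y) - measure M X * measure M Y\<bar> < e))"

definition mixing_actions :: "'a measure \<Rightarrow> 'g::topological_group_add set \<Rightarrow> ('g \<Rightarrow> 'a \<Rightarrow> 'a) set" where
  "mixing_actions M \<Gamma> = {T. is_action M T \<and> gamma_mixing M \<Gamma> T}"

definition leash_m :: "'a measure \<Rightarrow> (nat \<Rightarrow> 'a set) \<Rightarrow> nat set \<Rightarrow> (nat \<Rightarrow> 'g set) \<Rightarrow> 'g set
    \<Rightarrow> ('g \<Rightarrow> 'a \<Rightarrow> 'a) \<Rightarrow> ('g \<Rightarrow> 'a \<Rightarrow> 'a) \<Rightarrow> real" where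
  "leash_m M A I K \<Gamma> T S = dist_dG M A I K T S + (SUP g\<in>\<Gamma>. dist_a M A (T g) (S g))"

definition leash_w :: "'a measure \<Rightarrow> (nat \<Rightarrow> 'a set) \<Rightarrow> nat set \<Rightarrow> (nat \<Rightarrow> 'g set) \<Rightarrow> 'g set
    \<Rightarrow> ('g \<Rightarrow> 'a \<Rightarrow> 'a) \<Rightarrow> ('g \<Rightarrow> 'a \<Rightarrow> 'a) \<Rightarrow> real" where
  "leash_w M A I K \<Gamma> T S = dist_aG M A I K T S + (SUP g\<in>\<Gamma>. dist_a M A (T g) (S g))"

definition metric_open :: "'b set \<Rightarrow> ('b \<Rightarrow> 'b \<Rightarrow> real) \<Rightarrow> 'b set \<Rightarrow> bool" where
  "metric_open X \<rho> U \<longleftrightarrow> U \<subseteq> X \<and> (\<forall>x\<in>U. \<exists>e>0. \<forall>y\<in>X. \<rho> x y < e \<longrightarrow> y \<in> U)"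

end

theory Submission
  imports Defs
begin


lemma symdiff_sym: "symdiff X Y = symdiff Y X" by (auto simp: symdiff_def)

lemma symdiff_vimage: "symdiff (f -` X \<inter> S) (f -` Y \<inter> S) = f -` symdiff X Y \<inter> S"
  by (auto simp: symdiff_def)

lemma meas_pres_sets: "f \<in> meas_pres M M \<Longrightarrow> X \<in> sets M \<Longrightarrow> f -` X \<inter> space M \<in> sets M"
  by (auto simp: meas_pres_def)

lemma meas_pres_measure: "f \<in> meas_pres M M \<Longrightarrow> X \<in> sets M \<Longrightarrow> measure M (f -` X \<inter> space M) = measure M X"
  unfolding meas_pres_def using measure_distr by (metis (mono_tags, lifting) mem_Collect_eq)

lemma aut_inv_spec:
  assumes "mp_aut M T"
  shows "aut_inv M T \<in> meas_pres M M \<and> (AE x in M. aut_inv M T (T x) = x) \<and> (AE x in M. T (aut_inv M T x) = x)"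
proof -
  from assms obtain S where "S \<in> meas_pres M M \<and> (AE x in M. S (T x) = x) \<and> (AE x in M. T (S x) = x)"
    unfolding mp_aut_def by blast
  then show ?thesis unfolding aut_inv_def
    by (rule someI[of "\<lambda>S. S \<in> meas_pres M M \<and> (AE x in M. S (T x) = x) \<and> (AE x in M. T (S x) = x)"])
qed

lemma mp_aut_pres: "mp_aut M T \<Longrightarrow> T \<in> meas_pres M M" by (simp add: mp_aut_def)

lemma img_sets: "mp_aut M T \<Longrightarrow> X \<in> sets M \<Longrightarrow> aut_img M T X \<in> sets M"
  unfolding aut_img_def using aut_inv_spec meas_pres_sets by blast
lemma img_meas: "mp_aut M T \<Longrightarrow> X \<in> sets M \<Longrightarrow> measure M (aut_img M T X) = measure M X"
  unfolding aut_img_def using aut_inv_spec meas_pres_measure by blast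
lemma pre_sets: "mp_aut M T \<Longrightarrow> X \<in> sets M \<Longrightarrow> aut_pre M T X \<in> sets M"
  unfolding aut_pre_def using mp_aut_pres meas_pres_sets by blast
lemma pre_meas: "mp_aut M T \<Longrightarrow> X \<in> sets M \<Longrightarrow> measure M (aut_pre M T X) = measure M X"
  unfolding aut_pre_def using mp_aut_pres meas_pres_measure by blast

lemma symdiff_sets: "X \<in> sets M \<Longrightarrow> Y \<in> sets M \<Longrightarrow> symdiff X Y \<in> sets M"
  by (auto simp: symdiff_def)

lemma img_symdiff: "mp_aut M T \<Longrightarrow> X \<in> sets M \<Longrightarrow> Y \<in> sets M \<Longrightarrow>
   measure M (symdiff (aut_img M T X) (aut_img M T Y)) = measure M (symdiff X Y)"
  unfolding aut_img_def symdiff_vimage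
  using aut_inv_spec meas_pres_measure symdiff_sets by blast

lemma adjoint:
  assumes T: "mp_aut M T" and B: "B \<in> sets M" and C: "C \<in> sets M"
  shows "measure M (aut_pre M T B \<inter> C) = measure M (B \<inter> aut_img M T C)"
proof -
  let ?S = "aut_inv M T"
  have S: "?S \<in> meas_pres M M" and ae: "AE x in M. T (?S x) = x" using aut_inv_spec[OF T] by auto
  have Sm: "?S \<in> measurable M M" using S by (simp add: meas_pres_def)
  have s1: "aut_pre M T B \<inter> C \<in> sets M" using pre_sets[OF T B] C by auto
  have "measure M (aut_pre M T B \<inter> C) = measure M (?S -` (aut_pre M T B \<inter> C) \<inter> space M)"
    using meas_pres_measure[OF S s1] by simp
  also have "\<dots> = measure M (B \<inter> aut_img M T C)"
  proof (rule measure_eq_AE)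
    show "AE x in M. (x \<in> ?S -` (aut_pre M T B \<inter> C) \<inter> space M) = (x \<in> B \<inter> aut_img M T C)"
      using ae proof (rule AE_mp)
      show "AE x in M. T (?S x) = x \<longrightarrow> (x \<in> ?S -` (aut_pre M T B \<inter> C) \<inter> space M) = (x \<in> B \<inter> aut_img M T C)"
        by (rule AE_I2) (use measurable_space[OF Sm] in \<open>auto simp: aut_pre_def aut_img_def\<close>)
    qed
    show "?S -` (aut_pre M T B \<inter> C) \<inter> space M \<in> sets M" using meas_pres_sets[OF S s1] .
    show "B \<inter> aut_img M T C \<in> sets M" using B img_sets[OF T C] by auto
  qed
  finally show ?thesis .
qed

context prob_space begin

lemma symdiff_meas: "X \<in> sets M \<Longrightarrow> Y \<in> sets M \<Longrightarrow>
   measure M (symdiff X Y) = measure M X + measure M Y - 2 * measure M (X \<inter> Y)"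
proof -
  assume X: "X \<in> sets M" and Y: "Y \<in> sets M"
  have "measure M (symdiff X Y) = measure M (X - Y) + measure M ((Y - X) - (X - Y))"
    unfolding symdiff_def using X Y finite_measure_Union' by auto
  also have "(Y - X) - (X - Y) = Y - X" by auto
  finally show ?thesis using X Y finite_measure_Diff'[of X Y] finite_measure_Diff'[of Y X]
    by (simp add: Int_commute)
qed

lemma abs_meas_symdiff: "X \<in> sets M \<Longrightarrow> Y \<in> sets M \<Longrightarrow>
   \<bar>measure M X - measure M Y\<bar> \<le> measure M (symdiff X Y)"
proof -
  assume X: "X \<in> sets M" and Y: "Y \<in> sets M"
  have "measure M (X \<inter> Y) \<le> measure M X" "measure M (X \<inter> Y) \<le> measure M Y"
    using X Y by (auto intro!: finite_measure_mono)
  then show ?thesis using symdiff_meas[OF X Y] by linarith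
qed

lemma symdiff_tri: "X \<in> sets M \<Longrightarrow> Y \<in> sets M \<Longrightarrow> Z \<in> sets M \<Longrightarrow>
   measure M (symdiff X Z) \<le> measure M (symdiff X Y) + measure M (symdiff Y Z)"
proof -
  assume X: "X \<in> sets M" and Y: "Y \<in> sets M" and Z: "Z \<in> sets M"
  have "measure M (symdiff X Z) \<le> measure M (symdiff X Y \<union> symdiff Y Z)"
    by (rule finite_measure_mono) (auto simp: symdiff_def intro!: symdiff_sets X Y Z)
  also have "\<dots> \<le> measure M (symdiff X Y) + measure M (symdiff Y Z)"
    by (rule measure_Un_le) (auto intro!: symdiff_sets X Y Z)
  finally show ?thesis .
qed

lemma int_diff_bound: "X \<in> sets M \<Longrightarrow> Y \<in> sets M \<Longrightarrow> X' \<in> sets M \<Longrightarrow> Y' \<in> sets M \<Longrightarrow>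
   \<bar>measure M (X \<inter> Y) - measure M (X' \<inter> Y')\<bar> \<le> measure M (symdiff X X') + measure M (symdiff Y Y')"
proof -
  assume X: "X \<in> sets M" and Y: "Y \<in> sets M" and X': "X' \<in> sets M" and Y': "Y' \<in> sets M"
  have "\<bar>measure M (X \<inter> Y) - measure M (X' \<inter> Y')\<bar> \<le> measure M (symdiff (X \<inter> Y) (X' \<inter> Y'))"
    using X Y X' Y' by (intro abs_meas_symdiff) auto
  also have "\<dots> \<le> measure M (symdiff X X' \<union> symdiff Y Y')"
    by (rule finite_measure_mono) (auto simp: symdiff_def intro!: symdiff_sets X Y X' Y')
  also have "\<dots> \<le> measure M (symdiff X X') + measure M (symdiff Y Y')"
    by (rule measure_Un_le) (auto intro!: symdiff_sets X Y X' Y')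
  finally show ?thesis .
qed

end


lemma le_suminf_nonneg: "summable f \<Longrightarrow> (\<And>n. 0 \<le> f n) \<Longrightarrow> f n \<le> suminf (f::nat\<Rightarrow>real)"
  using sum_le_suminf[of f "{n}"] by auto

lemma summable_geo_half: "summable (\<lambda>j. c * (1/2::real)^j)"
  by (intro summable_mult summable_geometric) auto

lemma suminf_geo_half: "(\<Sum>j. c * (1/2::real)^j) = 2 * c"
proof -
  have "(\<Sum>j. c * (1/2::real)^j) = c * (\<Sum>j. (1/2::real)^j)"
    by (rule suminf_mult) (intro summable_geometric, auto)
  also have "(\<Sum>j. (1/2::real)^j) = 2" using suminf_geometric[of "1/2::real"] by simp
  finally show ?thesis by simp
qed

context prob_space begin

definition aterm :: "(nat \<Rightarrow> 'a set) \<Rightarrow> ('a \<Rightarrow> 'a) \<Rightarrow> ('a \<Rightarrow> 'a) \<Rightarrow> nat \<Rightarrow> nat \<Rightarrow> real" where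
  "aterm A T S i j = (1/2::real)^(i+j) *
      \<bar>measure M (aut_img M T (A i) \<inter> A j) - measure M (aut_img M S (A i) \<inter> A j)\<bar>"

lemma absdiff_le1: "\<bar>measure M X - measure M Y\<bar> \<le> 1"
  using prob_le_1[of X] prob_le_1[of Y] measure_nonneg[of M X] measure_nonneg[of M Y] by linarith

lemma aterm_nonneg: "0 \<le> aterm A T S i j" by (simp add: aterm_def)
lemma aterm_le: "aterm A T S i j \<le> (1/2)^i * (1/2)^j"
  unfolding aterm_def power_add using absdiff_le1
  by (metis (no_types, lifting) mult_left_le mult_nonneg_nonneg zero_le_divide_1_iff zero_le_numeral zero_le_power)

lemma aterm_summable: "summable (aterm A T S i)"
  by (rule summable_comparison_test'[OF summable_geo_half[of "(1/2)^i"]]) (use aterm_nonneg aterm_le in auto)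

lemma aterm_inner_le: "(\<Sum>j. aterm A T S i j) \<le> 2 * (1/2)^i"
proof -
  have "(\<Sum>j. aterm A T S i j) \<le> (\<Sum>j. (1/2)^i * (1/2::real)^j)"
    by (rule suminf_le) (use aterm_le aterm_summable summable_geo_half in auto)
  then show ?thesis using suminf_geo_half by simp
qed

lemma aterm_inner_nonneg: "0 \<le> (\<Sum>j. aterm A T S i j)"
  by (rule suminf_nonneg) (use aterm_summable aterm_nonneg in auto)

lemma aterm_outer_summable: "summable (\<lambda>i. \<Sum>j. aterm A T S i j)"
  by (rule summable_comparison_test'[OF summable_geo_half[of 2]]) (use aterm_inner_le aterm_inner_nonneg in auto)

lemma dist_a_eq: "dist_a M A T S = (\<Sum>i. \<Sum>j. aterm A T S i j)"
  unfolding dist_a_def aterm_def ..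

lemma dist_a_nonneg: "0 \<le> dist_a M A T S"
  unfolding dist_a_eq by (rule suminf_nonneg) (use aterm_outer_summable aterm_inner_nonneg in auto)

lemma dist_a_le4: "dist_a M A T S \<le> 4"
proof -
  have "dist_a M A T S \<le> (\<Sum>i. 2 * (1/2::real)^i)" unfolding dist_a_eq
    by (rule suminf_le) (use aterm_inner_le aterm_outer_summable summable_geo_half in auto)
  then show ?thesis using suminf_geo_half[of 2] by simp
qed

lemma aterm_le_dist_a: "aterm A T S i j \<le> dist_a M A T S"
proof -
  have "aterm A T S i j \<le> (\<Sum>j. aterm A T S i j)"
    by (rule le_suminf_nonneg) (use aterm_summable aterm_nonneg in auto)
  also have "\<dots> \<le> dist_a M A T S" unfolding dist_a_eq
    by (rule le_suminf_nonneg[where f="\<lambda>i. \<Sum>j. aterm A T S i j"]) (use aterm_outer_summable aterm_inner_nonneg in auto)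
  finally show ?thesis .
qed

lemma absdiff_le_dist_a:
  "\<bar>measure M (aut_img M T (A i) \<inter> A j) - measure M (aut_img M S (A i) \<inter> A j)\<bar> \<le> 2^(i+j) * dist_a M A T S"
proof -
  have "aterm A T S i j \<le> dist_a M A T S" by (rule aterm_le_dist_a)
  then have "2^(i+j) * aterm A T S i j \<le> 2^(i+j) * dist_a M A T S" by simp
  moreover have "2^(i+j) * aterm A T S i j = \<bar>measure M (aut_img M T (A i) \<inter> A j) - measure M (aut_img M S (A i) \<inter> A j)\<bar>"
    unfolding aterm_def by (simp add: power_one_over)
  ultimately show ?thesis by simp
qed

definition dterm :: "(nat \<Rightarrow> 'a set) \<Rightarrow> ('a \<Rightarrow> 'a) \<Rightarrow> ('a \<Rightarrow> 'a) \<Rightarrow> nat \<Rightarrow> real" where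
  "dterm A T S i = (1/2::real)^i *
      (measure M (symdiff (aut_img M T (A i)) (aut_img M S (A i))) +
       measure M (symdiff (aut_pre M T (A i)) (aut_pre M S (A i))))"

lemma dterm_nonneg: "0 \<le> dterm A T S i" by (simp add: dterm_def)
lemma dterm_le: "dterm A T S i \<le> 2 * (1/2)^i"
proof -
  have "measure M (symdiff (aut_img M T (A i)) (aut_img M S (A i))) +
       measure M (symdiff (aut_pre M T (A i)) (aut_pre M S (A i))) \<le> 2"
    using prob_le_1 by (smt (verit))
  then show ?thesis unfolding dterm_def by (simp add: mult.commute)
qed
lemma dterm_summable: "summable (dterm A T S)"
  by (rule summable_comparison_test'[OF summable_geo_half[of 2]]) (use dterm_nonneg dterm_le in auto)
lemma dist_d_eq: "dist_d M A T S = (\<Sum>i. dterm A T S i)"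
  unfolding dist_d_def dterm_def ..
lemma dist_d_nonneg: "0 \<le> dist_d M A T S"
  unfolding dist_d_eq by (rule suminf_nonneg) (use dterm_summable dterm_nonneg in auto)
lemma dist_d_le4: "dist_d M A T S \<le> 4"
proof -
  have "dist_d M A T S \<le> (\<Sum>i. 2 * (1/2::real)^i)" unfolding dist_d_eq
    by (rule suminf_le) (use dterm_le dterm_summable summable_geo_half in auto)
  then show ?thesis using suminf_geo_half[of 2] by simp
qed

lemma dist_a_le_dist_d:
  assumes A: "\<And>i. A i \<in> sets M" and T: "mp_aut M T" and S: "mp_aut M S"
  shows "dist_a M A T S \<le> 2 * dist_d M A T S"
proof -
  define sd where "sd i = measure M (symdiff (aut_img M T (A i)) (aut_img M S (A i)))" for i
  have inner: "(\<Sum>j. aterm A T S i j) \<le> 2 * dterm A T S i" for i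
  proof -
    have "(\<Sum>j. aterm A T S i j) \<le> (\<Sum>j. ((1/2)^i * sd i) * (1/2::real)^j)"
    proof (rule suminf_le)
      fix j
      have "\<bar>measure M (aut_img M T (A i) \<inter> A j) - measure M (aut_img M S (A i) \<inter> A j)\<bar> \<le> sd i + measure M (symdiff (A j) (A j))"
        unfolding sd_def by (rule int_diff_bound) (use A img_sets T S in auto)
      then have "\<bar>measure M (aut_img M T (A i) \<inter> A j) - measure M (aut_img M S (A i) \<inter> A j)\<bar> \<le> sd i"
        by (simp add: symdiff_def)
      then show "aterm A T S i j \<le> ((1/2)^i * sd i) * (1/2)^j"
        unfolding aterm_def power_add by (simp add: mult_left_mono mult.commute mult.left_commute)
    qed (use aterm_summable summable_geo_half in auto)
    also have "\<dots> = 2 * ((1/2)^i * sd i)" by (rule suminf_geo_half)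
    also have "\<dots> \<le> 2 * dterm A T S i" unfolding dterm_def sd_def by (simp add: mult_left_mono)
    finally show ?thesis .
  qed
  have "dist_a M A T S \<le> (\<Sum>i. 2 * dterm A T S i)" unfolding dist_a_eq
    by (rule suminf_le) (use inner aterm_outer_summable dterm_summable summable_mult in auto)
  also have "\<dots> = 2 * dist_d M A T S" unfolding dist_d_eq by (rule suminf_mult[OF dterm_summable])
  finally show ?thesis .
qed

end


context prob_space begin

lemma core:
  assumes A: "\<And>i. A i \<in> sets M" and T: "mp_aut M T" and S: "mp_aut M S"
    and B: "B \<in> sets M" and C: "C \<in> sets M"
  shows "\<bar>measure M (aut_img M T B \<inter> C) - measure M (aut_img M S B \<inter> C)\<bar>
     \<le> 2 * measure M (symdiff B (A i)) + 2 * measure M (symdiff C (A j)) + 2^(i+j) * dist_a M A T S"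
proof -
  have t1: "\<bar>measure M (aut_img M T B \<inter> C) - measure M (aut_img M T (A i) \<inter> A j)\<bar>
      \<le> measure M (symdiff B (A i)) + measure M (symdiff C (A j))"
    using int_diff_bound[of "aut_img M T B" C "aut_img M T (A i)" "A j"] img_symdiff[OF T B A]
      img_sets[OF T] A B C by auto
  have t3: "\<bar>measure M (aut_img M S B \<inter> C) - measure M (aut_img M S (A i) \<inter> A j)\<bar>
      \<le> measure M (symdiff B (A i)) + measure M (symdiff C (A j))"
    using int_diff_bound[of "aut_img M S B" C "aut_img M S (A i)" "A j"] img_symdiff[OF S B A]
      img_sets[OF S] A B C by auto
  note t2 = absdiff_le_dist_a[of T A i j S]
  show ?thesis using t1 t2 t3 by linarith
qed

lemma net:
  fixes F :: "'g::topological_space \<Rightarrow> 'a set"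
  assumes A: "\<And>i. A i \<in> sets M" and dense: "dense_family M A" and F: "\<And>g. F g \<in> sets M" and c: "\<And>g. measure M (F g) = c"
    and cont: "\<And>h. continuous_on UNIV (\<lambda>g. measure M (F g \<inter> F h))"
    and K: "compact K" and rho: "\<rho> > 0"
  shows "\<exists>N. \<forall>g\<in>K. \<exists>j<N. measure M (symdiff (F g) (A j)) < \<rho>"
proof -
  define U where "U h = {g. c - \<rho>/4 < measure M (F g \<inter> F h)}" for h
  have openU: "open (U h)" for h unfolding U_def
    by (rule open_Collect_less) (use cont in auto)
  have inU: "h \<in> U h" for h unfolding U_def using c[of h] rho by simp
  obtain t where t: "t \<subseteq> K" "finite t" "K \<subseteq> \<Union>(U ` t)"
    using compactE_image[OF K, of K U] openU inU by blast
  have "\<forall>h. \<exists>i. measure M (symdiff (A i) (F h)) < \<rho>/2"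
  proof
    fix h
    have "\<rho>/2 > 0" using rho by simp
    then show "\<exists>i. measure M (symdiff (A i) (F h)) < \<rho>/2"
      using dense F unfolding dense_family_def by blast
  qed
  then obtain jf where jf: "\<And>h. measure M (symdiff (A (jf h)) (F h)) < \<rho>/2" by metis
  define N where "N = Suc (Max (jf ` t))"
  show ?thesis
  proof (rule exI[of _ N], intro ballI)
    fix g assume g: "g \<in> K"
    then obtain h where h: "h \<in> t" "g \<in> U h" using t by auto
    have "jf h < N" unfolding N_def using t(2) h(1) by (simp add: le_imp_less_Suc)
    moreover have "measure M (symdiff (F g) (A (jf h))) < \<rho>"
    proof -
      have "measure M (symdiff (F g) (F h)) = c + c - 2 * measure M (F g \<inter> F h)"
        using symdiff_meas[OF F F] c by simp
      also have "\<dots> < \<rho>/2" using h(2) unfolding U_def by simp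
      finally have 1: "measure M (symdiff (F g) (F h)) < \<rho>/2" .
      have "measure M (symdiff (F g) (A (jf h))) \<le> measure M (symdiff (F g) (F h)) + measure M (symdiff (F h) (A (jf h)))"
        by (rule symdiff_tri) (use F A in auto)
      then show ?thesis using 1 jf[of h] by (simp add: symdiff_sym[of "F h" "A (jf h)"])
    qed
    ultimately show "\<exists>j<N. measure M (symdiff (F g) (A j)) < \<rho>" by blast
  qed
qed

end


lemma action_aut: "is_action M T \<Longrightarrow> mp_aut M (T g)"
  by (simp add: is_action_def)
lemma action_cont: "is_action M T \<Longrightarrow> X \<in> sets M \<Longrightarrow> Y \<in> sets M \<Longrightarrow>
   continuous_on UNIV (\<lambda>g. measure M (aut_img M (T g) X \<inter> Y))"
  by (simp add: is_action_def)

lemma pow2_mono_bound: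
  assumes "a < (\<delta>::real)" "\<delta> = \<rho> / 2^(i+N)" "j < N" "\<rho> > 0"
  shows "2^(i+j) * a \<le> \<rho>"
proof -
  have "(2::real)^(i+j) \<le> 2^(i+N)" using assms(3) by (intro power_increasing) auto
  moreover have "2^(i+j) * a \<le> 2^(i+j) * \<delta>" using assms(1) by simp
  moreover have "2^(i+N) * \<delta> = \<rho>" using assms(2) by simp
  moreover have "\<delta> > 0" using assms by simp
  ultimately show ?thesis by (smt (verit) mult_right_mono)
qed

context prob_space begin

lemma fwd:
  fixes T :: "'g::topological_group_add \<Rightarrow> 'a \<Rightarrow> 'a"
  assumes A: "\<And>i. A i \<in> sets M" and dense: "dense_family M A" and T: "is_action M T"
    and K: "compact K" and X: "X \<in> sets M" and eta: "\<eta> > 0"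
  shows "\<exists>\<delta>>0. \<forall>S. (\<forall>g. mp_aut M (S g)) \<longrightarrow> (\<forall>g\<in>K. dist_a M A (T g) (S g) < \<delta>) \<longrightarrow>
     (\<forall>g\<in>K. measure M (symdiff (aut_img M (T g) X) (aut_img M (S g) X)) < \<eta>)"
proof -
  define \<rho> where "\<rho> = \<eta> / 16"
  have rho: "\<rho> > 0" using eta by (simp add: \<rho>_def)
  define F where "F g = aut_img M (T g) X" for g
  have Ts: "mp_aut M (T g)" for g using action_aut[OF T] .
  have F: "F g \<in> sets M" for g unfolding F_def using img_sets[OF Ts X] .
  have Fm: "measure M (F g) = measure M X" for g unfolding F_def using img_meas[OF Ts X] .
  have cont: "continuous_on UNIV (\<lambda>g. measure M (F g \<inter> F h))" for h
    unfolding F_def[abs_def] using action_cont[OF T X] F[of h] unfolding F_def by blast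
  obtain N where N: "\<forall>g\<in>K. \<exists>j<N. measure M (symdiff (F g) (A j)) < \<rho>"
    using net[OF A dense F Fm cont K rho] by blast
  obtain i where i: "measure M (symdiff (A i) X) < \<rho>" using dense X rho unfolding dense_family_def by blast
  define \<delta> where "\<delta> = \<rho> / 2^(i+N)"
  have dpos: "\<delta> > 0" using rho by (simp add: \<delta>_def)
  show ?thesis
  proof (intro exI[of _ \<delta>] conjI allI impI ballI dpos)
    fix S g assume S: "\<forall>g. mp_aut M (S g)" and a: "\<forall>g\<in>K. dist_a M A (T g) (S g) < \<delta>" and g: "g \<in> K"
    obtain j where j: "j < N" "measure M (symdiff (F g) (A j)) < \<rho>" using N g by blast
    have Sg: "mp_aut M (S g)" using S by blast
    have c: "\<bar>measure M (aut_img M (T g) X \<inter> F g) - measure M (aut_img M (S g) X \<inter> F g)\<bar>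
       \<le> 2 * measure M (symdiff X (A i)) + 2 * measure M (symdiff (F g) (A j)) + 2^(i+j) * dist_a M A (T g) (S g)"
      by (rule core[OF A Ts Sg X F])
    have b: "2^(i+j) * dist_a M A (T g) (S g) \<le> \<rho>"
      using pow2_mono_bound[OF _ \<delta>_def j(1) rho] a g by blast
    have sx: "aut_img M (S g) X \<in> sets M" using img_sets[OF Sg X] .
    have "measure M (symdiff (F g) (aut_img M (S g) X)) = measure M X + measure M X - 2 * measure M (aut_img M (S g) X \<inter> F g)"
      using symdiff_meas[OF F sx] Fm img_meas[OF Sg X] by (simp add: Int_commute)
    moreover have "measure M (aut_img M (T g) X \<inter> F g) = measure M X" using Fm[of g] by (simp add: F_def)
    ultimately have "measure M (symdiff (F g) (aut_img M (S g) X)) \<le> 2 * (4*\<rho> + \<rho>)"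
      using c b i j(2) symdiff_sym[of X "A i"] by (smt (verit))
    then show "measure M (symdiff (aut_img M (T g) X) (aut_img M (S g) X)) < \<eta>"
      unfolding F_def \<rho>_def using eta by simp
  qed
qed

lemma bwd:
  fixes T :: "'g::topological_group_add \<Rightarrow> 'a \<Rightarrow> 'a"
  assumes A: "\<And>i. A i \<in> sets M" and dense: "dense_family M A" and T: "is_action M T"
    and K: "compact K" and X: "X \<in> sets M" and eta: "\<eta> > 0"
  shows "\<exists>\<delta>>0. \<forall>S. (\<forall>g. mp_aut M (S g)) \<longrightarrow> (\<forall>g\<in>K. dist_a M A (T g) (S g) < \<delta>) \<longrightarrow>
     (\<forall>g\<in>K. measure M (symdiff (aut_pre M (T g) X) (aut_pre M (S g) X)) < \<eta>)"
proof -
  define \<rho> where "\<rho> = \<eta> / 16"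
  have rho: "\<rho> > 0" using eta by (simp add: \<rho>_def)
  define F where "F g = aut_pre M (T g) X" for g
  have Ts: "mp_aut M (T g)" for g using action_aut[OF T] .
  have F: "F g \<in> sets M" for g unfolding F_def using pre_sets[OF Ts X] .
  have Fm: "measure M (F g) = measure M X" for g unfolding F_def using pre_meas[OF Ts X] .
  have cont: "continuous_on UNIV (\<lambda>g. measure M (F g \<inter> F h))" for h
  proof -
    have "(\<lambda>g. measure M (F g \<inter> F h)) = (\<lambda>g. measure M (aut_img M (T g) (F h) \<inter> X))"
      unfolding F_def[of h] using adjoint[OF Ts X F[of h]] by (auto simp: F_def Int_commute)
    then show ?thesis using action_cont[OF T F[of h] X] by metis
  qed
  obtain N where N: "\<forall>g\<in>K. \<exists>j<N. measure M (symdiff (F g) (A j)) < \<rho>"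
    using net[OF A dense F Fm cont K rho] by blast
  obtain i where i: "measure M (symdiff (A i) X) < \<rho>" using dense X rho unfolding dense_family_def by blast
  define \<delta> where "\<delta> = \<rho> / 2^(i+N)"
  have dpos: "\<delta> > 0" using rho by (simp add: \<delta>_def)
  show ?thesis
  proof (intro exI[of _ \<delta>] conjI allI impI ballI dpos)
    fix S g assume S: "\<forall>g. mp_aut M (S g)" and a: "\<forall>g\<in>K. dist_a M A (T g) (S g) < \<delta>" and g: "g \<in> K"
    obtain j where j: "j < N" "measure M (symdiff (F g) (A j)) < \<rho>" using N g by blast
    have Sg: "mp_aut M (S g)" using S by blast
    have c: "\<bar>measure M (aut_img M (T g) (F g) \<inter> X) - measure M (aut_img M (S g) (F g) \<inter> X)\<bar>
       \<le> 2 * measure M (symdiff (F g) (A j)) + 2 * measure M (symdiff X (A i)) + 2^(j+i) * dist_a M A (T g) (S g)"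
      by (rule core[OF A Ts Sg F X])
    have b: "2^(j+i) * dist_a M A (T g) (S g) \<le> \<rho>"
      using pow2_mono_bound[OF _ \<delta>_def j(1) rho] a g by (simp add: add.commute)
    have sx: "aut_pre M (S g) X \<in> sets M" using pre_sets[OF Sg X] .
    have "measure M (symdiff (F g) (aut_pre M (S g) X)) = measure M X + measure M X - 2 * measure M (aut_pre M (S g) X \<inter> F g)"
      using symdiff_meas[OF F sx] Fm pre_meas[OF Sg X] by (simp add: Int_commute)
    moreover have "measure M (aut_pre M (S g) X \<inter> F g) = measure M (aut_img M (S g) (F g) \<inter> X)"
      using adjoint[OF Sg X F] by (simp add: Int_commute)
    moreover have "measure M (aut_img M (T g) (F g) \<inter> X) = measure M X"
    proof -
      have "measure M (aut_img M (T g) (F g) \<inter> X) = measure M (aut_pre M (T g) X \<inter> F g)"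
        using adjoint[OF Ts X F] by (simp add: Int_commute)
      also have "\<dots> = measure M X" using Fm[of g] by (simp add: F_def)
      finally show ?thesis .
    qed
    ultimately have "measure M (symdiff (F g) (aut_pre M (S g) X)) \<le> 2 * (4*\<rho> + \<rho>)"
      using c b i j(2) symdiff_sym[of X "A i"] by (smt (verit))
    then show "measure M (symdiff (aut_pre M (T g) X) (aut_pre M (S g) X)) < \<eta>"
      unfolding F_def \<rho>_def using eta by simp
  qed
qed

end


lemma tail_summable: "summable (\<lambda>i. if N \<le> i then c * (1/2::real)^i else 0)"
proof -
  have "summable (\<lambda>n. (\<lambda>i. if N \<le> i then c * (1/2::real)^i else 0) (n + N))"
    using summable_geo_half[of "c * (1/2)^N"] by (simp add: power_add mult_ac)
  then show ?thesis by (rule summable_iff_shift[THEN iffD1])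
qed

lemma tail_sum: "(\<Sum>i. if N \<le> i then c * (1/2::real)^i else 0) = 2 * c * (1/2)^N"
proof -
  have "(\<Sum>i. if N \<le> i then c * (1/2::real)^i else 0) =
     (\<Sum>n. (if N \<le> n + N then c * (1/2::real)^(n+N) else 0)) + (\<Sum>i<N. if N \<le> i then c * (1/2::real)^i else 0)"
    by (rule suminf_split_initial_segment[OF tail_summable])
  also have "(\<Sum>i<N. if N \<le> i then c * (1/2::real)^i else 0) = 0" by simp
  also have "(\<Sum>n. (if N \<le> n + N then c * (1/2::real)^(n+N) else 0)) = (\<Sum>n. (c * (1/2)^N) * (1/2::real)^n)"
    by (simp add: power_add mult_ac)
  also have "\<dots> = 2 * (c * (1/2)^N)" by (rule suminf_geo_half)
  finally show ?thesis by simp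
qed

lemma geo_tail_small: "\<epsilon> > 0 \<Longrightarrow> \<exists>N. c * (1/2::real)^N \<le> \<epsilon>"
proof -
  assume e: "\<epsilon> > 0"
  show ?thesis
  proof (cases "c \<le> 0")
    case True then show ?thesis using e by (intro exI[of _ 0]) auto
  next
    case False
    then obtain N where "(1/2::real)^N < \<epsilon> / c" using real_arch_pow_inv[of "\<epsilon>/c" "1/2::real"] e by auto
    then show ?thesis using False by (intro exI[of _ N]) (simp add: field_simps)
  qed
qed

context prob_space begin

lemma dbound:
  fixes T :: "'g::topological_group_add \<Rightarrow> 'a \<Rightarrow> 'a"
  assumes A: "\<And>i. A i \<in> sets M" and dense: "dense_family M A" and T: "is_action M T"
    and K: "compact K" and eps: "\<epsilon> > 0"
  shows "\<exists>\<delta>>0. \<forall>S. (\<forall>g. mp_aut M (S g)) \<longrightarrow> (\<forall>g\<in>K. dist_a M A (T g) (S g) < \<delta>) \<longrightarrow>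
     (\<forall>g\<in>K. dist_d M A (T g) (S g) \<le> \<epsilon>)"
proof -
  obtain N where N: "4 * (1/2::real)^N \<le> \<epsilon>/2" using geo_tail_small[of "\<epsilon>/2" 4] eps by auto
  define \<eta> where "\<eta> = \<epsilon>/8"
  have eta: "\<eta> > 0" using eps by (simp add: \<eta>_def)
  have "\<forall>i. \<exists>\<delta>>0. \<forall>S. (\<forall>g. mp_aut M (S g)) \<longrightarrow> (\<forall>g\<in>K. dist_a M A (T g) (S g) < \<delta>) \<longrightarrow>
     (\<forall>g\<in>K. measure M (symdiff (aut_img M (T g) (A i)) (aut_img M (S g) (A i))) < \<eta>)"
    using fwd[OF A dense T K A eta] by blast
  then obtain df where df: "\<And>i. df i > 0" "\<And>i S. (\<forall>g. mp_aut M (S g)) \<Longrightarrow> (\<forall>g\<in>K. dist_a M A (T g) (S g) < df i) \<Longrightarrow>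
     (\<forall>g\<in>K. measure M (symdiff (aut_img M (T g) (A i)) (aut_img M (S g) (A i))) < \<eta>)"
    by metis
  have "\<forall>i. \<exists>\<delta>>0. \<forall>S. (\<forall>g. mp_aut M (S g)) \<longrightarrow> (\<forall>g\<in>K. dist_a M A (T g) (S g) < \<delta>) \<longrightarrow>
     (\<forall>g\<in>K. measure M (symdiff (aut_pre M (T g) (A i)) (aut_pre M (S g) (A i))) < \<eta>)"
    using bwd[OF A dense T K A eta] by blast
  then obtain db where db: "\<And>i. db i > 0" "\<And>i S. (\<forall>g. mp_aut M (S g)) \<Longrightarrow> (\<forall>g\<in>K. dist_a M A (T g) (S g) < db i) \<Longrightarrow>
     (\<forall>g\<in>K. measure M (symdiff (aut_pre M (T g) (A i)) (aut_pre M (S g) (A i))) < \<eta>)"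
    by metis
  define D where "D = insert 1 (df ` {..<N} \<union> db ` {..<N})"
  define \<delta> where "\<delta> = Min D"
  have Dfin: "finite D" unfolding D_def by auto
  have dpos: "\<delta> > 0" unfolding \<delta>_def using Dfin df(1) db(1) by (auto simp: D_def Min_gr_iff)
  have dle: "\<delta> \<le> df i" "\<delta> \<le> db i" if "i < N" for i
    unfolding \<delta>_def using Dfin that by (auto simp: D_def intro!: Min_le)
  show ?thesis
  proof (intro exI[of _ \<delta>] conjI allI impI ballI dpos)
    fix S g assume S: "\<forall>g. mp_aut M (S g)" and a: "\<forall>g\<in>K. dist_a M A (T g) (S g) < \<delta>" and g: "g \<in> K"
    define b where "b i = (2*\<eta>) * (1/2::real)^i + (if N \<le> i then 2 * (1/2::real)^i else 0)" for i
    have tb: "dterm A (T g) (S g) i \<le> b i" for i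
    proof (cases "N \<le> i")
      case True
      have "0 \<le> 2 * \<eta> * (1/2::real)^i" using eta by simp
      then show ?thesis using dterm_le[of A "T g" "S g" i] True unfolding b_def by simp
    next
      case False
      then have iN: "i < N" by simp
      have "\<forall>g\<in>K. dist_a M A (T g) (S g) < df i" using a dle(1)[OF iN] by force
      then have f: "measure M (symdiff (aut_img M (T g) (A i)) (aut_img M (S g) (A i))) < \<eta>"
        using df(2)[OF S] g by blast
      have "\<forall>g\<in>K. dist_a M A (T g) (S g) < db i" using a dle(2)[OF iN] by force
      then have bb: "measure M (symdiff (aut_pre M (T g) (A i)) (aut_pre M (S g) (A i))) < \<eta>"
        using db(2)[OF S] g by blast
      have "dterm A (T g) (S g) i \<le> (1/2)^i * (2*\<eta>)"
        unfolding dterm_def using f bb by (intro mult_left_mono) auto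
      then show ?thesis using False unfolding b_def by (simp add: mult.commute)
    qed
    have bs1: "summable (\<lambda>i. (2*\<eta>) * (1/2::real)^i)" by (rule summable_geo_half)
    have bs2: "summable (\<lambda>i. if N \<le> i then 2 * (1/2::real)^i else 0)" by (rule tail_summable)
    have bsum: "summable b" unfolding b_def using summable_add[OF bs1 bs2] .
    have "dist_d M A (T g) (S g) \<le> suminf b" unfolding dist_d_eq
      by (rule suminf_le[OF tb dterm_summable bsum])
    also have "suminf b = 2 * (2*\<eta>) + 2 * 2 * (1/2)^N"
      unfolding b_def using suminf_add[OF bs1 bs2] suminf_geo_half[of "2*\<eta>"] tail_sum[of N 2] by simp
    also have "\<dots> \<le> \<epsilon>" using N unfolding \<eta>_def by simp
    finally show "dist_d M A (T g) (S g) \<le> \<epsilon>" .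
  qed
qed

end


lemma geo_summable_on: "(\<lambda>i. c * (1/2::real)^i) summable_on I"
proof -
  have "summable (\<lambda>i. norm (c * (1/2::real)^i))"
    using summable_geo_half[of "\<bar>c\<bar>"] by (simp add: abs_mult power_abs)
  then have "(\<lambda>i. c * (1/2::real)^i) summable_on UNIV" by (rule norm_summable_imp_summable_on)
  then show ?thesis by (rule summable_on_subset) simp
qed

lemma sup_bounds:
  fixes f :: "'g \<Rightarrow> real"
  assumes "K \<noteq> {}" "\<And>g. 0 \<le> f g" "\<And>g. f g \<le> 4"
  shows "0 \<le> (SUP g\<in>K. f g)" "(SUP g\<in>K. f g) \<le> 4" "bdd_above (f ` K)" "g \<in> K \<Longrightarrow> f g \<le> (SUP g\<in>K. f g)"
proof -
  show bdd: "bdd_above (f ` K)" using assms(3) by (intro bdd_aboveI[of _ 4]) auto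
  obtain g0 where g0: "g0 \<in> K" using assms(1) by auto
  show "0 \<le> (SUP g\<in>K. f g)" using cSUP_upper[OF g0 bdd] assms(2)[of g0] by linarith
  show "(SUP g\<in>K. f g) \<le> 4" using assms(1,3) by (intro cSUP_least) auto
  show "g \<in> K \<Longrightarrow> f g \<le> (SUP g\<in>K. f g)" using cSUP_upper[OF _ bdd] by blast
qed

lemma weighted_summable:
  fixes f :: "nat \<Rightarrow> real"
  assumes "\<And>i. i \<in> I \<Longrightarrow> 0 \<le> f i \<and> f i \<le> 4"
  shows "(\<lambda>i. (1/2::real)^i * f i) summable_on I"
  by (rule summable_on_comparison_test[OF geo_summable_on[of 4]])
     (use assms in \<open>auto intro: mult_left_mono simp: mult.commute\<close>)

context prob_space begin

lemma supd: "K \<noteq> {} \<Longrightarrow> 0 \<le> (SUP g\<in>K. dist_d M A (T g) (S g)) \<and> (SUP g\<in>K. dist_d M A (T g) (S g)) \<le> 4"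
  using sup_bounds[of K "\<lambda>g. dist_d M A (T g) (S g)"] dist_d_nonneg dist_d_le4 by auto
lemma supa: "K \<noteq> {} \<Longrightarrow> 0 \<le> (SUP g\<in>K. dist_a M A (T g) (S g)) \<and> (SUP g\<in>K. dist_a M A (T g) (S g)) \<le> 4"
  using sup_bounds[of K "\<lambda>g. dist_a M A (T g) (S g)"] dist_a_nonneg dist_a_le4 by auto

lemma dist_aG_summable: "(\<And>i. i \<in> I \<Longrightarrow> K i \<noteq> {}) \<Longrightarrow>
  (\<lambda>i. (1/2::real)^i * (SUP g\<in>K i. dist_a M A (T g) (S g))) summable_on I"
proof (rule weighted_summable)
  fix i assume "\<And>i. i \<in> I \<Longrightarrow> K i \<noteq> {}" "i \<in> I"
  then show "0 \<le> (SUP g\<in>K i. dist_a M A (T g) (S g)) \<and> (SUP g\<in>K i. dist_a M A (T g) (S g)) \<le> 4"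
    using supa[of "K i" A T S] by blast
qed
lemma dist_dG_summable: "(\<And>i. i \<in> I \<Longrightarrow> K i \<noteq> {}) \<Longrightarrow>
  (\<lambda>i. (1/2::real)^i * (SUP g\<in>K i. dist_d M A (T g) (S g))) summable_on I"
proof (rule weighted_summable)
  fix i assume "\<And>i. i \<in> I \<Longrightarrow> K i \<noteq> {}" "i \<in> I"
  then show "0 \<le> (SUP g\<in>K i. dist_d M A (T g) (S g)) \<and> (SUP g\<in>K i. dist_d M A (T g) (S g)) \<le> 4"
    using supd[of "K i" A T S] by blast
qed

lemma dist_aG_nonneg: "(\<And>i. i \<in> I \<Longrightarrow> K i \<noteq> {}) \<Longrightarrow> 0 \<le> dist_aG M A I K T S"
  unfolding dist_aG_def
proof (rule infsum_nonneg)
  fix i assume "\<And>i. i \<in> I \<Longrightarrow> K i \<noteq> {}" "i \<in> I"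
  then show "0 \<le> (1/2::real)^i * (SUP g\<in>K i. dist_a M A (T g) (S g))"
    using supa[of "K i" A T S] by simp
qed
lemma dist_dG_nonneg: "(\<And>i. i \<in> I \<Longrightarrow> K i \<noteq> {}) \<Longrightarrow> 0 \<le> dist_dG M A I K T S"
  unfolding dist_dG_def
proof (rule infsum_nonneg)
  fix i assume "\<And>i. i \<in> I \<Longrightarrow> K i \<noteq> {}" "i \<in> I"
  then show "0 \<le> (1/2::real)^i * (SUP g\<in>K i. dist_d M A (T g) (S g))"
    using supd[of "K i" A T S] by simp
qed

lemma dist_aG_le:
  assumes A: "\<And>i. A i \<in> sets M" and KI: "\<And>i. i \<in> I \<Longrightarrow> K i \<noteq> {}"
    and T: "\<And>g. mp_aut M (T g)" and S: "\<And>g. mp_aut M (S g)"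
  shows "dist_aG M A I K T S \<le> 2 * dist_dG M A I K T S"
proof -
  have "dist_aG M A I K T S \<le> infsum (\<lambda>i. 2 * ((1/2::real)^i * (SUP g\<in>K i. dist_d M A (T g) (S g)))) I"
    unfolding dist_aG_def
  proof (rule infsum_mono[OF dist_aG_summable[OF KI]])
    show "(\<lambda>i. 2 * ((1/2::real)^i * (SUP g\<in>K i. dist_d M A (T g) (S g)))) summable_on I"
      using dist_dG_summable[OF KI] by (rule summable_on_cmult_right)
    fix i assume i: "i \<in> I"
    have "(SUP g\<in>K i. dist_a M A (T g) (S g)) \<le> 2 * (SUP g\<in>K i. dist_d M A (T g) (S g))"
    proof (rule cSUP_least)
      show "K i \<noteq> {}" using KI[OF i] .
      fix g assume g: "g \<in> K i"
      have "dist_a M A (T g) (S g) \<le> 2 * dist_d M A (T g) (S g)" by (rule dist_a_le_dist_d[OF A T S])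
      also have "\<dots> \<le> 2 * (SUP g\<in>K i. dist_d M A (T g) (S g))"
        using sup_bounds(4)[OF KI[OF i], of "\<lambda>g. dist_d M A (T g) (S g)" g] dist_d_nonneg dist_d_le4 g by auto
      finally show "dist_a M A (T g) (S g) \<le> 2 * (SUP g\<in>K i. dist_d M A (T g) (S g))" .
    qed
    then show "(1/2::real)^i * (SUP g\<in>K i. dist_a M A (T g) (S g)) \<le> 2 * ((1/2::real)^i * (SUP g\<in>K i. dist_d M A (T g) (S g)))"
      by (simp add: mult_left_mono)
  qed
  also have "\<dots> = 2 * dist_dG M A I K T S" unfolding dist_dG_def by (rule infsum_cmult_right')
  finally show ?thesis .
qed

lemma term_le_dist_aG:
  assumes KI: "\<And>i. i \<in> I \<Longrightarrow> K i \<noteq> {}" and i: "i \<in> I"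
  shows "(1/2::real)^i * (SUP g\<in>K i. dist_a M A (T g) (S g)) \<le> dist_aG M A I K T S"
proof -
  have "infsum (\<lambda>i. (1/2::real)^i * (SUP g\<in>K i. dist_a M A (T g) (S g))) {i} \<le> dist_aG M A I K T S"
    unfolding dist_aG_def
  proof (rule infsum_mono2)
    show "(\<lambda>i. (1/2::real)^i * (SUP g\<in>K i. dist_a M A (T g) (S g))) summable_on I"
      using dist_aG_summable[OF KI] .
    fix x assume "x \<in> I - {i}"
    then show "0 \<le> (1/2::real)^x * (SUP g\<in>K x. dist_a M A (T g) (S g))"
      using supa[of "K x" A T S] KI by simp
  qed (use i in auto)
  then show ?thesis by simp
qed

end


context prob_space begin

lemma dGbound:
  fixes T :: "'g::topological_group_add \<Rightarrow> 'a \<Rightarrow> 'a"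
  assumes A: "\<And>i. A i \<in> sets M" and dense: "dense_family M A" and T: "is_action M T"
    and KI: "\<And>i. i \<in> I \<Longrightarrow> compact (K i) \<and> K i \<noteq> {}" and eps: "\<epsilon> > 0"
  shows "\<exists>\<delta>>0. \<forall>S. (\<forall>g. mp_aut M (S g)) \<longrightarrow> dist_aG M A I K T S < \<delta> \<longrightarrow> dist_dG M A I K T S \<le> \<epsilon>"
proof -
  have KI': "\<And>i. i \<in> I \<Longrightarrow> K i \<noteq> {}" using KI by blast
  obtain N where N: "8 * (1/2::real)^N \<le> \<epsilon>/2" using geo_tail_small[of "\<epsilon>/2" 8] eps by auto
  define K' where "K' i = (if i \<in> I then K i else {})" for i
  have cK': "compact (K' i)" for i unfolding K'_def using KI by auto
  have e4: "\<epsilon>/4 > 0" using eps by simp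
  have "\<forall>i. \<exists>\<delta>>0. \<forall>S. (\<forall>g. mp_aut M (S g)) \<longrightarrow> (\<forall>g\<in>K' i. dist_a M A (T g) (S g) < \<delta>) \<longrightarrow>
     (\<forall>g\<in>K' i. dist_d M A (T g) (S g) \<le> \<epsilon>/4)"
    using dbound[OF A dense T cK' e4] by blast
  then obtain dd where dd: "\<And>i. dd i > 0" "\<And>i S. (\<forall>g. mp_aut M (S g)) \<Longrightarrow> (\<forall>g\<in>K' i. dist_a M A (T g) (S g) < dd i) \<Longrightarrow>
     (\<forall>g\<in>K' i. dist_d M A (T g) (S g) \<le> \<epsilon>/4)"
    by metis
  define D where "D = insert 1 ((\<lambda>i. dd i * (1/2::real)^i) ` {..<N})"
  define \<delta> where "\<delta> = Min D"
  have Dfin: "finite D" unfolding D_def by auto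
  have dpos: "\<delta> > 0" unfolding \<delta>_def using Dfin dd(1) by (auto simp: D_def Min_gr_iff)
  have dle: "\<delta> \<le> dd i * (1/2)^i" if "i < N" for i
    unfolding \<delta>_def using Dfin that by (auto simp: D_def intro!: Min_le)
  show ?thesis
  proof (intro exI[of _ \<delta>] conjI allI impI dpos)
    fix S assume S: "\<forall>g. mp_aut M (S g)" and a: "dist_aG M A I K T S < \<delta>"
    define f where "f i = (1/2::real)^i * (SUP g\<in>K i. dist_d M A (T g) (S g))" for i
    define b where "b i = (\<epsilon>/4) * (1/2::real)^i + (if N \<le> i then 4 * (1/2::real)^i else 0)" for i
    have fb: "f i \<le> b i" if i: "i \<in> I" for i
    proof (cases "N \<le> i")
      case True
      have "f i \<le> 4 * (1/2)^i" unfolding f_def using supd[of "K i" A T S, OF KI'[OF i]] by (simp add: mult.commute)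
      moreover have "0 \<le> (\<epsilon>/4) * (1/2::real)^i" using eps by simp
      ultimately show ?thesis using True unfolding b_def by simp
    next
      case False
      then have iN: "i < N" by simp
      have "(1/2::real)^i * (SUP g\<in>K i. dist_a M A (T g) (S g)) < dd i * (1/2)^i"
        using term_le_dist_aG[of I K i A T S, OF KI' i] a dle[OF iN] by linarith
      then have sa: "(SUP g\<in>K i. dist_a M A (T g) (S g)) < dd i" by (simp add: mult.commute)
      have "\<forall>g\<in>K' i. dist_a M A (T g) (S g) < dd i"
      proof
        fix g assume "g \<in> K' i"
        then have g: "g \<in> K i" using i by (simp add: K'_def)
        have "dist_a M A (T g) (S g) \<le> (SUP g\<in>K i. dist_a M A (T g) (S g))"
          using sup_bounds(4)[OF KI'[OF i], of "\<lambda>g. dist_a M A (T g) (S g)" g] dist_a_nonneg dist_a_le4 g by auto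
        then show "dist_a M A (T g) (S g) < dd i" using sa by linarith
      qed
      then have "\<forall>g\<in>K' i. dist_d M A (T g) (S g) \<le> \<epsilon>/4" by (rule dd(2)[OF S])
      then have dg: "\<forall>g\<in>K i. dist_d M A (T g) (S g) \<le> \<epsilon>/4" using i by (simp add: K'_def)
      have "(SUP g\<in>K i. dist_d M A (T g) (S g)) \<le> \<epsilon>/4"
        using KI'[OF i] dg by (intro cSUP_least) auto
      then have "f i \<le> (\<epsilon>/4) * (1/2)^i" unfolding f_def by (simp add: mult.commute mult_left_mono)
      then show ?thesis using False unfolding b_def by simp
    qed
    have bs1: "summable (\<lambda>i. (\<epsilon>/4) * (1/2::real)^i)" by (rule summable_geo_half)
    have bs2: "summable (\<lambda>i. if N \<le> i then 4 * (1/2::real)^i else 0)" by (rule tail_summable)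
    have bsum: "summable b" unfolding b_def using summable_add[OF bs1 bs2] .
    have bnn: "0 \<le> b i" for i unfolding b_def using eps by simp
    have bhas: "(b has_sum suminf b) UNIV"
      by (rule sums_nonneg_imp_has_sum_strong) (use bsum bnn in \<open>auto simp: summable_sums\<close>)
    have "dist_dG M A I K T S = infsum f I" unfolding dist_dG_def f_def ..
    also have "\<dots> \<le> infsum b UNIV"
    proof (rule infsum_mono_neutral)
      show "f summable_on I" unfolding f_def by (rule dist_dG_summable[OF KI'])
      show "b summable_on UNIV" using bhas by (rule has_sum_imp_summable)
    qed (use fb bnn in auto)
    also have "\<dots> = suminf b" by (rule infsumI[OF bhas])
    also have "suminf b = 2 * (\<epsilon>/4) + 2 * 4 * (1/2)^N"
      unfolding b_def using suminf_add[OF bs1 bs2] suminf_geo_half[of "\<epsilon>/4"] tail_sum[of N 4] by simp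
    also have "\<dots> \<le> \<epsilon>" using N by simp
    finally show "dist_dG M A I K T S \<le> \<epsilon>" .
  qed
qed

end


theorem mainTheorem9:
  fixes M :: "'a measure"
    and A :: "nat \<Rightarrow> 'a set"
    and I :: "nat set"
    and K :: "nat \<Rightarrow> 'g::{topological_group_add, t2_space, first_countable_topology} set"
    and \<Gamma> :: "'g set"
  assumes "prob_space M"
    and "lebesgue_space M"
    and "non_atomic M"
    and "\<And>i. A i \<in> sets M"
    and "generates_mod0 M A"
    and "dense_family M A"
    and "locally_compact_space (euclidean :: 'g topology)"
    and "\<And>i. i \<in> I \<Longrightarrow> compact (K i) \<and> interior (K i) \<noteq> {}"
    and "generated_subgroup (\<Union>i\<in>I. K i) = UNIV"
    and "\<not> (\<exists>C. compact C \<and> \<Gamma> \<subseteq> C)"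
  shows "\<forall>U. metric_open (mixing_actions M \<Gamma>) (leash_w M A I K \<Gamma>) U \<longleftrightarrow>
             metric_open (mixing_actions M \<Gamma>) (leash_m M A I K \<Gamma>) U"
proof -
  interpret prob_space M by fact
  note A = assms(4) and dense = assms(6)
  have KI: "\<And>i. i \<in> I \<Longrightarrow> compact (K i) \<and> K i \<noteq> {}"
    using assms(8) interior_subset by blast
  have KI': "\<And>i. i \<in> I \<Longrightarrow> K i \<noteq> {}" using KI by blast
  have Gne: "\<Gamma> \<noteq> {}" using assms(10) by auto
  define X where "X = mixing_actions M \<Gamma>"
  have act: "T \<in> X \<Longrightarrow> is_action M T" for T by (simp add: X_def mixing_actions_def)
  have aut: "T \<in> X \<Longrightarrow> mp_aut M (T g)" for T g using act action_aut by blast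
  define sG where "sG T S = (SUP g\<in>\<Gamma>. dist_a M A (T g) (S g))" for T S :: "'g \<Rightarrow> 'a \<Rightarrow> 'a"
  have sG: "0 \<le> sG T S" for T S
    unfolding sG_def using sup_bounds(1)[OF Gne, of "\<lambda>g. dist_a M A (T g) (S g)"] dist_a_nonneg dist_a_le4 by auto
  have w_eq: "leash_w M A I K \<Gamma> T S = dist_aG M A I K T S + sG T S" for T S
    unfolding leash_w_def sG_def ..
  have m_eq: "leash_m M A I K \<Gamma> T S = dist_dG M A I K T S + sG T S" for T S
    unfolding leash_m_def sG_def ..
  have easy: "leash_w M A I K \<Gamma> T S \<le> 2 * leash_m M A I K \<Gamma> T S" if "T \<in> X" "S \<in> X" for T S
  proof -
    have "dist_aG M A I K T S \<le> 2 * dist_dG M A I K T S"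
      by (rule dist_aG_le[OF A _ aut[OF that(1)] aut[OF that(2)]]) (rule KI')
    moreover have "0 \<le> sG T S" by (rule sG)
    ultimately show ?thesis unfolding w_eq m_eq by (smt (verit))
  qed
  have hard: "\<exists>\<delta>>0. \<forall>S\<in>X. leash_w M A I K \<Gamma> T S < \<delta> \<longrightarrow> leash_m M A I K \<Gamma> T S < \<epsilon>"
    if T: "T \<in> X" and e: "\<epsilon> > 0" for T \<epsilon>
  proof -
    have e2: "\<epsilon>/2 > 0" using e by simp
    obtain \<delta> where d: "\<delta> > 0" "\<forall>S. (\<forall>g. mp_aut M (S g)) \<longrightarrow> dist_aG M A I K T S < \<delta> \<longrightarrow> dist_dG M A I K T S \<le> \<epsilon>/2"
      using dGbound[where A=A and I=I and K=K and T=T, OF A dense act[OF T] KI e2] by blast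
    show ?thesis
    proof (intro exI[of _ "min \<delta> (\<epsilon>/2)"] conjI ballI impI)
      show "min \<delta> (\<epsilon>/2) > 0" using d(1) e by simp
      fix S assume S: "S \<in> X" and w: "leash_w M A I K \<Gamma> T S < min \<delta> (\<epsilon>/2)"
      have an: "0 \<le> dist_aG M A I K T S" by (rule dist_aG_nonneg[where A=A and I=I and K=K and T=T and S=S, OF KI'])
      have "dist_aG M A I K T S < \<delta>" using w an sG[of T S] unfolding w_eq by linarith
      then have "dist_dG M A I K T S \<le> \<epsilon>/2" using d(2) aut[OF S] by blast
      then show "leash_m M A I K \<Gamma> T S < \<epsilon>" using w an unfolding w_eq m_eq by linarith
    qed
  qed
  show ?thesis unfolding X_def[symmetric]
  proof (intro allI iffI)
    fix U assume U: "metric_open X (leash_w M A I K \<Gamma>) U"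
    show "metric_open X (leash_m M A I K \<Gamma>) U" unfolding metric_open_def
    proof (intro conjI ballI)
      show "U \<subseteq> X" using U by (simp add: metric_open_def)
      fix T assume T: "T \<in> U"
      then obtain e where e: "e > 0" "\<forall>S\<in>X. leash_w M A I K \<Gamma> T S < e \<longrightarrow> S \<in> U"
        using U by (auto simp: metric_open_def)
      have TX: "T \<in> X" using T U by (auto simp: metric_open_def)
      show "\<exists>e>0. \<forall>S\<in>X. leash_m M A I K \<Gamma> T S < e \<longrightarrow> S \<in> U"
      proof (intro exI[of _ "e/2"] conjI ballI impI)
        show "e/2 > 0" using e by simp
        fix S assume S: "S \<in> X" "leash_m M A I K \<Gamma> T S < e/2"
        then show "S \<in> U" using e(2) easy[OF TX S(1)] by force
      qed
    qed
  next
    fix U assume U: "metric_open X (leash_m M A I K \<Gamma>) U"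
    show "metric_open X (leash_w M A I K \<Gamma>) U" unfolding metric_open_def
    proof (intro conjI ballI)
      show "U \<subseteq> X" using U by (simp add: metric_open_def)
      fix T assume T: "T \<in> U"
      then obtain e where e: "e > 0" "\<forall>S\<in>X. leash_m M A I K \<Gamma> T S < e \<longrightarrow> S \<in> U"
        using U by (auto simp: metric_open_def)
      have TX: "T \<in> X" using T U by (auto simp: metric_open_def)
      obtain \<delta> where "\<delta> > 0" "\<forall>S\<in>X. leash_w M A I K \<Gamma> T S < \<delta> \<longrightarrow> leash_m M A I K \<Gamma> T S < e"
        using hard[OF TX e(1)] by blast
      then show "\<exists>e>0. \<forall>S\<in>X. leash_w M A I K \<Gamma> T S < e \<longrightarrow> S \<in> U" using e(2) by blast
    qed
  qed
qed


end
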